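(* Let $\mathsf L$ be an intermediate logic with $\mathsf{ND}\subseteq\mathsf L$, and let $\phi$ be a consistent formula. The following are equivalent: (i) $\vdash_{\mathsf L^\neg}\phi\leftrightarrow\neg\neg\phi$; (ii) $\phi$ is $\mathcal{ST}$-projective in $\mathsf L^\neg$, where $\mathcal{ST}$ is the class of all substitutions stable in $\mathsf L^\neg$.
   Context: Formulas are built from propositional variables, $\bot,\top$ with $\wedge,\vee,\to$; $\neg\phi:=\phi\to\bot$. An intermediate theory is a set $\mathsf T$ of formulas closed under modus ponens with $\mathsf{IPC}\subseteq\mathsf T\subseteq\mathsf{CPC}$; an intermediate logic is an intermediate theory closed under uniform substitution. $\Gamma\vdash_{\mathsf T}\phi$ means $\phi$ is derivable from $\Gamma\cup\mathsf T$ by modus ponens; $\vdash_{\mathsf T}\phi$ means $\phi\in\mathsf T$. $\mathsf{ND}$ is the intermediate logic axiomatized over $\mathsf{IPC}$ by all substitution instances of $(\neg p\to\bigvee_{i=1}^k\neg q_i)\to\bigvee_{i=1}^k(\neg p\to\neg q_i)$ for $k\ge1$. For an intermediate logic $\mathsf L$, $\phi^\neg$ is obtained by replacing each propositional variable $p$ in $\phi$ by $\neg p$, and $\mathsf L^\neg=\{\phi\mid\phi^\neg\in\mathsf L\}$. A substitution is a map on formulas commuting with connectives and constants; it is stable in $\mathsf L^\neg$ if $\vdash_{\mathsf L^\neg}\sigma(p)\leftrightarrow\neg\neg\sigma(p)$ for all variables $p$. $\phi$ is consistent if $\phi\nvdash_{\mathsf L^\neg}\bot$. For a set $\mathcal S$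 of substitutions, $\phi$ is $\mathcal S$-projective in $\mathsf L^\neg$ if there is $\sigma\in\mathcal S$ with $\vdash_{\mathsf L^\neg}\sigma(\phi)$, and $\phi,\sigma(p)\vdash_{\mathsf L^\neg}p$ and $\phi,p\vdash_{\mathsf L^\neg}\sigma(p)$ for all variables $p$. *)

theory Defs
  imports Main
begin

datatype form = Var nat | Bot | Top | And form form | Or form form | Imp form form

definition Neg :: "form \<Rightarrow> form" where
  "Neg A = Imp A Bot"

definition Iff :: "form \<Rightarrow> form \<Rightarrow> form" where
  "Iff A B = And (Imp A B) (Imp B A)"

fun bigor :: "form list \<Rightarrow> form" where
  "bigor [] = Bot"
| "bigor [A] = A"
| "bigor (A # As) = Or A (bigor As)"

fun subst :: "(nat \<Rightarrow> form) \<Rightarrow> form \<Rightarrow> form" where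
  "subst s (Var p) = s p"
| "subst s Bot = Bot"
| "subst s Top = Top"
| "subst s (And A B) = And (subst s A) (subst s B)"
| "subst s (Or A B) = Or (subst s A) (subst s B)"
| "subst s (Imp A B) = Imp (subst s A) (subst s B)"

inductive ipc_axiom :: "form \<Rightarrow> bool" where
  "ipc_axiom (Imp A (Imp B A))"
| "ipc_axiom (Imp (Imp A (Imp B C)) (Imp (Imp A B) (Imp A C)))"
| "ipc_axiom (Imp (And A B) A)"
| "ipc_axiom (Imp (And A B) B)"
| "ipc_axiom (Imp A (Imp B (And A B)))"
| "ipc_axiom (Imp A (Or A B))"
| "ipc_axiom (Imp B (Or A B))"
| "ipc_axiom (Imp (Imp A C) (Imp (Imp B C) (Imp (Or A B) C)))"
| "ipc_axiom (Imp Bot A)"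
| "ipc_axiom Top"

inductive_set IPC :: "form set" where
  ax: "ipc_axiom A \<Longrightarrow> A \<in> IPC"
| mp: "Imp A B \<in> IPC \<Longrightarrow> A \<in> IPC \<Longrightarrow> B \<in> IPC"

fun eval :: "(nat \<Rightarrow> bool) \<Rightarrow> form \<Rightarrow> bool" where
  "eval v (Var p) = v p"
| "eval v Bot = False"
| "eval v Top = True"
| "eval v (And A B) = (eval v A \<and> eval v B)"
| "eval v (Or A B) = (eval v A \<or> eval v B)"
| "eval v (Imp A B) = (eval v A \<longrightarrow> eval v B)"

definition CPC :: "form set" where
  "CPC = {A. \<forall>v. eval v A}"

definition mp_closed :: "form set \<Rightarrow> bool" where
  "mp_closed T \<longleftrightarrow> (\<forall>A B. Imp A B \<in> T \<longrightarrow> A \<in> T \<longrightarrow> B \<in> T)"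

definition intermediate_theory :: "form set \<Rightarrow> bool" where
  "intermediate_theory T \<longleftrightarrow> mp_closed T \<and> IPC \<subseteq> T \<and> T \<subseteq> CPC"

definition intermediate_logic :: "form set \<Rightarrow> bool" where
  "intermediate_logic L \<longleftrightarrow> intermediate_theory L \<and> (\<forall>s A. A \<in> L \<longrightarrow> subst s A \<in> L)"

inductive derives :: "form set \<Rightarrow> form set \<Rightarrow> form \<Rightarrow> bool" where
  hyp: "A \<in> \<Gamma> \<union> T \<Longrightarrow> derives T \<Gamma> A"
| mp: "derives T \<Gamma> (Imp A B) \<Longrightarrow> derives T \<Gamma> A \<Longrightarrow> derives T \<Gamma> B"

definition nd_axiom :: "form \<Rightarrow> bool" where
  "nd_axiom F \<longleftrightarrow> (\<exists>A Bs. Bs \<noteq> [] \<and>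
     F = Imp (Imp (Neg A) (bigor (map Neg Bs)))
             (bigor (map (\<lambda>B. Imp (Neg A) (Neg B)) Bs)))"

text \<open>ND: axiomatized over IPC by all substitution instances of the ND axioms
  (the set of instances is closed under substitution already).\<close>
inductive_set ND :: "form set" where
  ipc: "A \<in> IPC \<Longrightarrow> A \<in> ND"
| ax: "nd_axiom A \<Longrightarrow> A \<in> ND"
| mp: "Imp A B \<in> ND \<Longrightarrow> A \<in> ND \<Longrightarrow> B \<in> ND"

definition negvars :: "form \<Rightarrow> form" where
  "negvars A = subst (\<lambda>p. Neg (Var p)) A"

definition Lneg :: "form set \<Rightarrow> form set" where
  "Lneg L = {A. negvars A \<in> L}"

definition stable :: "form set \<Rightarrow> (nat \<Rightarrow> form) \<Rightarrow> bool" where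
  "stable T s \<longleftrightarrow> (\<forall>p. Iff (s p) (Neg (Neg (s p))) \<in> T)"

definition consistent :: "form set \<Rightarrow> form \<Rightarrow> bool" where
  "consistent T A \<longleftrightarrow> \<not> derives T {A} Bot"

definition projective :: "form set \<Rightarrow> (nat \<Rightarrow> form) set \<Rightarrow> form \<Rightarrow> bool" where
  "projective T S A \<longleftrightarrow> (\<exists>s\<in>S. subst s A \<in> T \<and>
      (\<forall>p. derives T {A, s p} (Var p) \<and> derives T {A, Var p} (s p)))"

end

theory Submission
  imports Defs
begin

fun vars :: "form \<Rightarrow> nat set" where
  "vars (Var p) = {p}"
| "vars Bot = {}"
| "vars Top = {}"
| "vars (And A B) = vars A \<union> vars B"
| "vars (Or A B) = vars A \<union> vars B"
| "vars (Imp A B) = vars A \<union> vars B"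

lemma finite_vars: "finite (vars A)"
  by (induction A) auto

lemma subst_Var: "subst Var A = A"
  by (induction A) auto

lemma subst_comp: "subst f (subst g A) = subst (\<lambda>p. subst f (g p)) A"
  by (induction A) auto

lemma subst_Neg[simp]: "subst s (Neg A) = Neg (subst s A)"
  by (simp add: Neg_def)

lemma subst_Iff[simp]: "subst s (Iff A B) = Iff (subst s A) (subst s B)"
  by (simp add: Iff_def)

lemma negvars_Imp: "negvars (Imp A B) = Imp (negvars A) (negvars B)"
  by (simp add: negvars_def)

lemma negvars_subst: "negvars (subst s A) = subst (\<lambda>p. negvars (s p)) A"
  unfolding negvars_def by (simp add: subst_comp)

locale ithy =
  fixes T :: "form set"
  assumes ipc: "IPC \<subseteq> T" and mpc: "mp_closed T"
begin

abbreviation D where "D \<equiv> derives T"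

lemma ax: "ipc_axiom A \<Longrightarrow> D \<Gamma> A"
  using ipc by (auto intro: derives.hyp IPC.ax)

lemma th: "A \<in> T \<Longrightarrow> D \<Gamma> A"
  by (auto intro: derives.hyp)

lemma assm: "A \<in> \<Gamma> \<Longrightarrow> D \<Gamma> A"
  by (auto intro: derives.hyp)

lemma mono: "D \<Gamma> A \<Longrightarrow> \<Gamma> \<subseteq> \<Delta> \<Longrightarrow> D \<Delta> A"
  by (induction rule: derives.induct) (auto intro: derives.intros)

lemma weak: "D \<Gamma> A \<Longrightarrow> D (insert B \<Gamma>) A"
  by (erule mono) auto

lemma mp: "D \<Gamma> (Imp A B) \<Longrightarrow> D \<Gamma> A \<Longrightarrow> D \<Gamma> B"
  by (rule derives.mp)

lemma imp_self: "D \<Gamma> (Imp A A)"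
proof -
  have 1: "D \<Gamma> (Imp (Imp A (Imp (Imp A A) A)) (Imp (Imp A (Imp A A)) (Imp A A)))"
    by (rule ax) (rule ipc_axiom.intros)
  have 2: "D \<Gamma> (Imp A (Imp (Imp A A) A))" by (rule ax) (rule ipc_axiom.intros)
  have 3: "D \<Gamma> (Imp A (Imp A A))" by (rule ax) (rule ipc_axiom.intros)
  show ?thesis using mp[OF mp[OF 1 2] 3] .
qed

lemma D_induct:
  assumes "derives T' \<Gamma>' A" "T' = T" "\<Gamma>' = \<Gamma>"
    "\<And>A. A \<in> \<Gamma> \<union> T \<Longrightarrow> P A"
    "\<And>A B. D \<Gamma> (Imp A B) \<Longrightarrow> P (Imp A B) \<Longrightarrow> D \<Gamma> A \<Longrightarrow> P A \<Longrightarrow> P B"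
  shows "P A"
  using assms(1-3)
proof (induction rule: derives.induct)
  case (hyp A) then show ?case using assms(4) by blast
next
  case (mp A B) then show ?case using assms(5) by blast
qed

lemma ded_aux: assumes "D (insert A \<Gamma>) B" shows "D \<Gamma> (Imp A B)"
  using assms
proof (rule D_induct[OF _ refl refl])
  fix B assume 1: "B \<in> insert A \<Gamma> \<union> T"
  show "D \<Gamma> (Imp A B)"
  proof (cases "B = A")
    case True then show ?thesis by (simp add: imp_self)
  next
    case False
    then have "D \<Gamma> B" using 1 by (auto intro: derives.hyp)
    moreover have "D \<Gamma> (Imp B (Imp A B))" by (rule ax) (rule ipc_axiom.intros)
    ultimately show ?thesis using mp by blast
  qed
next
  fix C B assume 2: "D \<Gamma> (Imp A (Imp C B))" "D \<Gamma> (Imp A C)"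
  have "D \<Gamma> (Imp (Imp A (Imp C B)) (Imp (Imp A C) (Imp A B)))"
    by (rule ax) (rule ipc_axiom.intros)
  then show "D \<Gamma> (Imp A B)" using 2 by (meson derives.mp)
qed

lemma impI: "D (insert A \<Gamma>) B \<Longrightarrow> D \<Gamma> (Imp A B)"
  using ded_aux by blast

lemma der_T: assumes "D {} A" shows "A \<in> T"
  using assms
proof (rule D_induct[OF _ refl refl])
  fix A assume "A \<in> {} \<union> T" then show "A \<in> T" by simp
next
  fix A B assume "Imp A B \<in> T" "A \<in> T" then show "B \<in> T"
    using mpc by (auto simp: mp_closed_def)
qed

lemma andI: "D \<Gamma> A \<Longrightarrow> D \<Gamma> B \<Longrightarrow> D \<Gamma> (And A B)"
  using ax[OF ipc_axiom.intros(5)] mp by blast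
lemma andE1: "D \<Gamma> (And A B) \<Longrightarrow> D \<Gamma> A"
  using ax[OF ipc_axiom.intros(3)] mp by blast
lemma andE2: "D \<Gamma> (And A B) \<Longrightarrow> D \<Gamma> B"
  using ax[OF ipc_axiom.intros(4)] mp by blast
lemma orI1: "D \<Gamma> A \<Longrightarrow> D \<Gamma> (Or A B)"
  using ax[OF ipc_axiom.intros(6)] mp by blast
lemma orI2: "D \<Gamma> B \<Longrightarrow> D \<Gamma> (Or A B)"
  using ax[OF ipc_axiom.intros(7)] mp by blast
lemma orE: "D \<Gamma> (Or A B) \<Longrightarrow> D (insert A \<Gamma>) C \<Longrightarrow> D (insert B \<Gamma>) C \<Longrightarrow> D \<Gamma> C"
  using ax[OF ipc_axiom.intros(8)] mp impI by metis
lemma botE: "D \<Gamma> Bot \<Longrightarrow> D \<Gamma> A"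
  using ax[OF ipc_axiom.intros(9)] mp by blast
lemma topI: "D \<Gamma> Top"
  using ax[OF ipc_axiom.intros(10)] .
lemma cut: "D \<Gamma> A \<Longrightarrow> D (insert A \<Gamma>) B \<Longrightarrow> D \<Gamma> B"
  using impI mp by blast
lemma negI: "D (insert A \<Gamma>) Bot \<Longrightarrow> D \<Gamma> (Neg A)"
  unfolding Neg_def by (rule impI)
lemma negE: "D \<Gamma> (Neg A) \<Longrightarrow> D \<Gamma> A \<Longrightarrow> D \<Gamma> Bot"
  unfolding Neg_def by (rule mp)
lemma iffI: "D (insert A \<Gamma>) B \<Longrightarrow> D (insert B \<Gamma>) A \<Longrightarrow> D \<Gamma> (Iff A B)"
  unfolding Iff_def by (intro andI impI)
lemma iffD1: "D \<Gamma> (Iff A B) \<Longrightarrow> D \<Gamma> A \<Longrightarrow> D \<Gamma> B"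
  unfolding Iff_def using andE1 mp by blast
lemma iffD2: "D \<Gamma> (Iff A B) \<Longrightarrow> D \<Gamma> B \<Longrightarrow> D \<Gamma> A"
  unfolding Iff_def using andE2 mp by blast
lemma iff_sym: "D \<Gamma> (Iff A B) \<Longrightarrow> D \<Gamma> (Iff B A)"
  by (intro iffI) (auto intro: iffD1 iffD2 weak assm)

lemma ins_swap: "D (insert A (insert B \<Gamma>)) C \<Longrightarrow> D (insert B (insert A \<Gamma>)) C"
  by (simp add: insert_commute)

lemma dni: "D \<Gamma> A \<Longrightarrow> D \<Gamma> (Neg (Neg A))"
  by (intro negI) (rule negE[OF assm weak], auto)

lemma nn_mono: "D \<Gamma> (Neg (Neg A)) \<Longrightarrow> D (insert A \<Gamma>) B \<Longrightarrow> D \<Gamma> (Neg (Neg B))"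
proof -
  assume 1: "D \<Gamma> (Neg (Neg A))" and 2: "D (insert A \<Gamma>) B"
  have "D (insert A (insert (Neg B) \<Gamma>)) B"
    using 2 by (rule mono) auto
  then have "D (insert A (insert (Neg B) \<Gamma>)) Bot"
    by (rule negE[OF assm, rotated]) auto
  then have "D (insert (Neg B) \<Gamma>) (Neg A)" by (rule negI)
  then have "D (insert (Neg B) \<Gamma>) Bot" using weak[OF 1] negE by blast
  then show ?thesis by (rule negI)
qed

lemma stab: "D \<Gamma> (Iff B (Neg (Neg B))) \<Longrightarrow> D \<Gamma> (Neg (Neg B)) \<Longrightarrow> D \<Gamma> B"
  by (rule iffD2)

lemma cong: "(\<And>p. D \<Gamma> (Iff (f p) (g p))) \<Longrightarrow> D \<Gamma> (Iff (subst f A) (subst g A))"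
proof (induction A)
  case (Var x) then show ?case by simp
next
  case Bot then show ?case by (simp add: iffI assm)
next
  case Top then show ?case by (simp add: iffI assm)
next
  case (And A1 A2)
  then have h1: "D \<Gamma> (Iff (subst f A1) (subst g A1))" and h2: "D \<Gamma> (Iff (subst f A2) (subst g A2))"
    by auto
  show ?case
  proof (simp, intro iffI andI)
    show "D (insert (And (subst f A1) (subst f A2)) \<Gamma>) (subst g A1)"
      by (rule iffD1[OF weak[OF h1]], rule andE1[of _ _ "subst f A2"], rule assm) simp
    show "D (insert (And (subst f A1) (subst f A2)) \<Gamma>) (subst g A2)"
      by (rule iffD1[OF weak[OF h2]], rule andE2[of _ "subst f A1"], rule assm) simp
    show "D (insert (And (subst g A1) (subst g A2)) \<Gamma>) (subst f A1)"
      by (rule iffD2[OF weak[OF h1]], rule andE1[of _ _ "subst g A2"], rule assm) simp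
    show "D (insert (And (subst g A1) (subst g A2)) \<Gamma>) (subst f A2)"
      by (rule iffD2[OF weak[OF h2]], rule andE2[of _ "subst g A1"], rule assm) simp
  qed
next
  case (Or A1 A2)
  then have h1: "D \<Gamma> (Iff (subst f A1) (subst g A1))" and h2: "D \<Gamma> (Iff (subst f A2) (subst g A2))"
    by auto
  show ?case
  proof (simp, intro iffI)
    show "D (insert (Or (subst f A1) (subst f A2)) \<Gamma>) (Or (subst g A1) (subst g A2))"
      by (rule orE[of _ "subst f A1" "subst f A2"], rule assm, simp, rule orI1, rule iffD1[OF weak[OF weak[OF h1]]], rule assm, simp,
          rule orI2, rule iffD1[OF weak[OF weak[OF h2]]], rule assm, simp)
    show "D (insert (Or (subst g A1) (subst g A2)) \<Gamma>) (Or (subst f A1) (subst f A2))"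
      by (rule orE[of _ "subst g A1" "subst g A2"], rule assm, simp, rule orI1, rule iffD2[OF weak[OF weak[OF h1]]], rule assm, simp,
          rule orI2, rule iffD2[OF weak[OF weak[OF h2]]], rule assm, simp)
  qed
next
  case (Imp A1 A2)
  then have h1: "D \<Gamma> (Iff (subst f A1) (subst g A1))" and h2: "D \<Gamma> (Iff (subst f A2) (subst g A2))"
    by auto
  show ?case
  proof (simp, intro iffI impI)
    show "D (insert (subst g A1) (insert (Imp (subst f A1) (subst f A2)) \<Gamma>)) (subst g A2)"
      by (rule iffD1[OF weak[OF weak[OF h2]]], rule mp[of _ "subst f A1"], rule assm, simp)
         (rule iffD2[OF weak[OF weak[OF h1]]], rule assm, simp)
    show "D (insert (subst f A1) (insert (Imp (subst g A1) (subst g A2)) \<Gamma>)) (subst f A2)"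
      by (rule iffD2[OF weak[OF weak[OF h2]]], rule mp[of _ "subst g A1"], rule assm, simp)
         (rule iffD1[OF weak[OF weak[OF h1]]], rule assm, simp)
  qed
qed

lemma kalmar:
  "(\<And>p. p \<in> vars A \<Longrightarrow> D \<Gamma> (if v p then s p else Neg (s p))) \<Longrightarrow>
   D \<Gamma> (if eval v A then subst s A else Neg (subst s A))"
proof (induction A)
  case (Var x) then show ?case by (cases "v x") auto
next
  case Bot then show ?case by (simp add: negI assm)
next
  case Top then show ?case by (simp add: topI)
next
  case (And A1 A2)
  then have h1: "D \<Gamma> (if eval v A1 then subst s A1 else Neg (subst s A1))"
    and h2: "D \<Gamma> (if eval v A2 then subst s A2 else Neg (subst s A2))" by auto
  show ?case
  proof (cases "eval v A1")
    case c1: True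
    show ?thesis
    proof (cases "eval v A2")
      case True then show ?thesis using c1 h1 h2 by (simp add: andI)
    next
      case False then show ?thesis using h2
        by (auto intro!: negI intro: negE[OF weak] andE2 assm)
    qed
  next
    case False then show ?thesis using h1
      by (auto intro!: negI intro: negE[OF weak] andE1 assm)
  qed
next
  case (Or A1 A2)
  then have h1: "D \<Gamma> (if eval v A1 then subst s A1 else Neg (subst s A1))"
    and h2: "D \<Gamma> (if eval v A2 then subst s A2 else Neg (subst s A2))" by auto
  show ?case
  proof (cases "eval v A1")
    case c1: True then show ?thesis using h1 by (simp add: orI1)
  next
    case c1: False
    show ?thesis
    proof (cases "eval v A2")
      case True then show ?thesis using c1 h2 by (simp add: orI2)
    next
      case False then show ?thesis using c1 h1 h2
        by (auto intro!: negI intro: orE[OF assm] negE[OF weak[OF weak]] assm)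
    qed
  qed
next
  case (Imp A1 A2)
  then have h1: "D \<Gamma> (if eval v A1 then subst s A1 else Neg (subst s A1))"
    and h2: "D \<Gamma> (if eval v A2 then subst s A2 else Neg (subst s A2))" by auto
  show ?case
  proof (cases "eval v A2")
    case True then show ?thesis using h2 by (simp add: impI weak)
  next
    case c2: False
    show ?thesis
    proof (cases "eval v A1")
      case True then show ?thesis using c2 h1 h2
        by (auto intro!: negI intro: negE[OF weak] mp[OF assm] weak)
    next
      case False then show ?thesis using h1
        by (auto intro!: impI intro: botE negE[OF weak] assm)
    qed
  qed
qed

definition lits :: "(nat \<Rightarrow> bool) \<Rightarrow> nat set \<Rightarrow> form set" where
  "lits v S = (\<lambda>p. if v p then Var p else Neg (Var p)) ` S"

lemma elim: "finite S \<Longrightarrow> (\<forall>v. D (\<Delta> \<union> lits v S) Bot) \<Longrightarrow> D \<Delta> Bot"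
proof (induction S rule: finite_induct)
  case empty then show ?case by (simp add: lits_def)
next
  case (insert x S)
  have "D (\<Delta> \<union> lits v S) Bot" for v
  proof -
    have e: "lits (v(x:=b)) S = lits v S" for b
      unfolding lits_def using insert(2) by (intro image_cong) auto
    have "D (\<Delta> \<union> lits (v(x:=True)) (insert x S)) Bot" using insert(4) by blast
    then have 1: "D (insert (Var x) (\<Delta> \<union> lits v S)) Bot"
      using e[of True] by (simp add: lits_def)
    have "D (\<Delta> \<union> lits (v(x:=False)) (insert x S)) Bot" using insert(4) by blast
    then have 2: "D (insert (Neg (Var x)) (\<Delta> \<union> lits v S)) Bot"
      using e[of False] by (simp add: lits_def)
    show ?thesis using negE[OF negI[OF 2] negI[OF 1]] .
  qed
  then show ?case using insert(3) by blast
qed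

end


lemma negvars_Neg: "negvars (Neg A) = Neg (negvars A)"
  by (simp add: negvars_def)
lemma negvars_Iff: "negvars (Iff A B) = Iff (negvars A) (negvars B)"
  by (simp add: negvars_def)

lemma Lneg_ithy:
  assumes "intermediate_logic L"
  shows "ithy L" "ithy (Lneg L)"
proof -
  from assms have mpc: "mp_closed L" and ipc: "IPC \<subseteq> L"
    and sub: "\<And>s A. A \<in> L \<Longrightarrow> subst s A \<in> L"
    by (auto simp: intermediate_logic_def intermediate_theory_def)
  show "ithy L" by standard (fact ipc, fact mpc)
  show "ithy (Lneg L)"
  proof
    show "IPC \<subseteq> Lneg L" using ipc sub by (auto simp: Lneg_def negvars_def)
    show "mp_closed (Lneg L)" using mpc
      by (auto simp: Lneg_def mp_closed_def negvars_Imp)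
  qed
qed

theorem lemma4p7:
  fixes L :: "form set" and \<phi> :: form
  assumes "intermediate_logic L"
    and "ND \<subseteq> L"
    and "consistent (Lneg L) \<phi>"
  shows "Iff \<phi> (Neg (Neg \<phi>)) \<in> Lneg L
     \<longleftrightarrow> projective (Lneg L) {s. stable (Lneg L) s} \<phi>"
proof -
  interpret L: ithy L using Lneg_ithy[OF assms(1)] by simp
  interpret N: ithy "Lneg L" using Lneg_ithy[OF assms(1)] by simp
  have sub: "\<And>s A. A \<in> L \<Longrightarrow> subst s A \<in> L"
    using assms(1) by (auto simp: intermediate_logic_def)
  have varst: "N.D \<Gamma> (Iff (Var p) (Neg (Neg (Var p))))" for \<Gamma> p
  proof -
    have "L.D {} (Iff (Neg (Var p)) (Neg (Neg (Neg (Var p)))))"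
    proof (rule L.iffI)
      show "L.D {Neg (Var p)} (Neg (Neg (Neg (Var p))))" by (rule L.dni, rule L.assm) simp
      have "L.D {Var p, Neg (Neg (Neg (Var p)))} Bot"
        by (rule L.negE[of _ "Neg (Neg (Var p))"], rule L.assm, simp, rule L.dni, rule L.assm, simp)
      then show "L.D {Neg (Neg (Neg (Var p)))} (Neg (Var p))" by (rule L.negI)
    qed
    then have "Iff (Neg (Var p)) (Neg (Neg (Neg (Var p)))) \<in> L" by (rule L.der_T)
    then have "Iff (Var p) (Neg (Neg (Var p))) \<in> Lneg L"
      by (simp add: Lneg_def negvars_Iff negvars_Neg negvars_def)
    then show ?thesis by (rule N.th)
  qed
  have substst: "subst s A \<in> Lneg L" if A: "A \<in> Lneg L" and st: "stable (Lneg L) s" for s A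
  proof -
    let ?t = "\<lambda>p. Neg (negvars (s p))"
    have "negvars A \<in> L" using A by (simp add: Lneg_def)
    then have m: "subst ?t (negvars A) \<in> L" by (rule sub)
    have eq: "subst ?t (negvars A) = subst (\<lambda>p. Neg (Neg (negvars (s p)))) A"
      unfolding negvars_def[of A] subst_comp by simp
    have "subst (\<lambda>p. Neg (Neg (negvars (s p)))) A \<in> L" using m unfolding eq .
    then have 1: "L.D {} (subst (\<lambda>p. Neg (Neg (negvars (s p)))) A)" by (rule L.th)
    have "L.D {} (Iff (Neg (Neg (negvars (s p)))) (negvars (s p)))" for p
    proof -
      have "Iff (s p) (Neg (Neg (s p))) \<in> Lneg L" using st by (simp add: stable_def)
      then have "L.D {} (Iff (negvars (s p)) (Neg (Neg (negvars (s p)))))"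
        by (intro L.th) (simp add: Lneg_def negvars_Iff negvars_Neg)
      then show ?thesis by (rule L.iff_sym)
    qed
    then have "L.D {} (Iff (subst (\<lambda>p. Neg (Neg (negvars (s p)))) A) (subst (\<lambda>p. negvars (s p)) A))"
      by (rule L.cong)
    then have "L.D {} (subst (\<lambda>p. negvars (s p)) A)" using 1 by (rule L.iffD1)
    then have "subst (\<lambda>p. negvars (s p)) A \<in> L" by (rule L.der_T)
    then show ?thesis by (simp add: Lneg_def negvars_subst)
  qed
  show ?thesis
  proof
    assume i: "Iff \<phi> (Neg (Neg \<phi>)) \<in> Lneg L"
    obtain v where v: "eval v \<phi>"
    proof (rule ccontr)
      assume "\<not> thesis"
      then have nv: "\<not> eval v \<phi>" for v using that by blast
      have "N.D ({\<phi>} \<union> N.lits v (vars \<phi>)) Bot" for v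
      proof -
        have "N.D (insert \<phi> (N.lits v (vars \<phi>)))
              (if eval v \<phi> then subst Var \<phi> else Neg (subst Var \<phi>))"
          by (rule N.kalmar) (auto intro!: N.assm simp: N.lits_def)
        then have "N.D (insert \<phi> (N.lits v (vars \<phi>))) (Neg \<phi>)"
          using nv by (simp add: subst_Var)
        then show ?thesis by (simp add: N.negE N.assm)
      qed
      then have "N.D {\<phi>} Bot" by (intro N.elim[OF finite_vars]) blast
      then show False using assms(3) by (simp add: consistent_def)
    qed
    define \<sigma> where "\<sigma> p = (if v p then Imp \<phi> (Var p) else And \<phi> (Var p))" for p
    define c where "c p = (if v p then Top else Bot)" for p
    have phist: "N.D \<Gamma> (Iff \<phi> (Neg (Neg \<phi>)))" for \<Gamma> using i by (rule N.th)
    have stable: "stable (Lneg L) \<sigma>"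
      unfolding stable_def
    proof
      fix p
      have "N.D {} (Iff (\<sigma> p) (Neg (Neg (\<sigma> p))))"
      proof (rule N.iffI)
        show "N.D {\<sigma> p} (Neg (Neg (\<sigma> p)))" by (rule N.dni, rule N.assm) simp
        let ?G = "{Neg (Neg (\<sigma> p))}"
        have nn: "N.D ?G (Neg (Neg (\<sigma> p)))" by (rule N.assm) simp
        show "N.D ?G (\<sigma> p)"
        proof (cases "v p")
          case True
          show ?thesis unfolding \<sigma>_def using True
          proof (simp, intro N.impI)
            have sp: "\<sigma> p = Imp \<phi> (Var p)" using True by (simp add: \<sigma>_def)
            have nv: "N.D (insert \<phi> ?G) (Neg (Neg (Var p)))"
              by (rule N.nn_mono[OF N.weak[OF nn]], rule N.mp[OF N.assm N.assm]) (auto simp: sp)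
            then show "N.D {\<phi>, Neg (Neg (Imp \<phi> (Var p)))} (Var p)"
              using N.stab[OF varst nv] sp by simp
          qed
        next
          case False
          have sf: "\<sigma> p = And \<phi> (Var p)" using False by (simp add: \<sigma>_def)
          have a: "N.D ?G (Neg (Neg \<phi>))"
            by (rule N.nn_mono[OF nn], rule N.andE1[of _ _ "Var p"], rule N.assm) (simp add: sf)
          have b: "N.D ?G (Neg (Neg (Var p)))"
            by (rule N.nn_mono[OF nn], rule N.andE2[of _ \<phi>], rule N.assm) (simp add: sf)
          show ?thesis using N.andI[OF N.stab[OF phist a] N.stab[OF varst b]] sf by simp
        qed
      qed
      then show "Iff (\<sigma> p) (Neg (Neg (\<sigma> p))) \<in> Lneg L" by (rule N.der_T)
    qed
    have proj: "N.D {\<phi>, \<sigma> p} (Var p) \<and> N.D {\<phi>, Var p} (\<sigma> p)" for p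
    proof (cases "v p")
      case True
      have "N.D {\<phi>, Imp \<phi> (Var p)} (Var p)" by (rule N.mp[of _ \<phi>]; rule N.assm) auto
      moreover have "N.D {\<phi>, Var p} (Imp \<phi> (Var p))" by (rule N.impI, rule N.assm) auto
      ultimately show ?thesis using True by (simp add: \<sigma>_def)
    next
      case False
      have "N.D {\<phi>, And \<phi> (Var p)} (Var p)" by (rule N.andE2[of _ \<phi>], rule N.assm) auto
      moreover have "N.D {\<phi>, Var p} (And \<phi> (Var p))" by (rule N.andI; rule N.assm) auto
      ultimately show ?thesis using False by (simp add: \<sigma>_def)
    qed
    have A: "N.D {\<phi>} (subst \<sigma> \<phi>)"
    proof -
      have "N.D {\<phi>} (Iff (\<sigma> p) (Var p))" for p
        using proj[of p] by (intro N.iffI) (auto simp: insert_commute)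
      then have "N.D {\<phi>} (Iff (subst \<sigma> \<phi>) (subst Var \<phi>))" by (rule N.cong)
      then have e: "N.D {\<phi>} (Iff (subst \<sigma> \<phi>) \<phi>)" by (simp add: subst_Var)
      show ?thesis by (rule N.iffD2[OF e], rule N.assm) simp
    qed
    have B: "N.D {Neg \<phi>} (subst \<sigma> \<phi>)"
    proof -
      have "N.D {Neg \<phi>} (Iff (\<sigma> p) (c p))" for p
      proof (cases "v p")
        case True
        have "N.D {Neg \<phi>} (Iff (Imp \<phi> (Var p)) Top)"
        proof (rule N.iffI)
          show "N.D {Imp \<phi> (Var p), Neg \<phi>} Top" by (rule N.topI)
          show "N.D {Top, Neg \<phi>} (Imp \<phi> (Var p))"
            by (rule N.impI, rule N.botE, rule N.negE[of _ \<phi>]; rule N.assm) simp_all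
        qed
        then show ?thesis using True by (simp add: \<sigma>_def c_def)
      next
        case False
        have "N.D {Neg \<phi>} (Iff (And \<phi> (Var p)) Bot)"
        proof (rule N.iffI)
          show "N.D {And \<phi> (Var p), Neg \<phi>} Bot"
            by (rule N.negE[of _ \<phi>], rule N.assm, simp, rule N.andE1[of _ _ "Var p"], rule N.assm, simp)
          show "N.D {Bot, Neg \<phi>} (And \<phi> (Var p))"
            by (rule N.botE, rule N.assm) simp
        qed
        then show ?thesis using False by (simp add: \<sigma>_def c_def)
      qed
      then have 1: "N.D {Neg \<phi>} (Iff (subst \<sigma> \<phi>) (subst c \<phi>))" by (rule N.cong)
      have "N.D {Neg \<phi>} (if eval v \<phi> then subst c \<phi> else Neg (subst c \<phi>))"
      proof (rule N.kalmar)
        fix p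
        show "N.D {Neg \<phi>} (if v p then c p else Neg (c p))"
        proof (cases "v p")
          case True then show ?thesis by (simp add: c_def N.topI)
        next
          case False
          have "N.D {Neg \<phi>} (Neg Bot)" by (rule N.negI, rule N.assm) simp
          then show ?thesis using False by (simp add: c_def)
        qed
      qed
      then have "N.D {Neg \<phi>} (subst c \<phi>)" using v by simp
      then show ?thesis by (rule N.iffD2[OF 1])
    qed
    have C: "N.D {} (Neg (Neg (subst \<sigma> \<phi>)))"
    proof (rule N.negI)
      have a: "N.D {\<phi>, Neg (subst \<sigma> \<phi>)} Bot"
        by (rule N.negE[of _ "subst \<sigma> \<phi>"], rule N.assm, simp, rule N.mono[OF A]) auto
      have "N.D {Neg (subst \<sigma> \<phi>)} (Neg \<phi>)" using a by (rule N.negI)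
      moreover have "N.D {Neg \<phi>, Neg (subst \<sigma> \<phi>)} Bot"
        by (rule N.negE[of _ "subst \<sigma> \<phi>"], rule N.assm, simp, rule N.mono[OF B]) auto
      ultimately show "N.D {Neg (subst \<sigma> \<phi>)} Bot"
        by (rule N.cut)
    qed
    have "Iff (subst \<sigma> \<phi>) (Neg (Neg (subst \<sigma> \<phi>))) \<in> Lneg L"
      using substst[OF i stable] by simp
    then have "N.D {} (subst \<sigma> \<phi>)" using C by (rule N.stab[OF N.th])
    then have "subst \<sigma> \<phi> \<in> Lneg L" by (rule N.der_T)
    then show "projective (Lneg L) {s. stable (Lneg L) s} \<phi>"
      unfolding projective_def using stable proj by blast
  next
    assume "projective (Lneg L) {s. stable (Lneg L) s} \<phi>"
    then obtain \<sigma> where st: "stable (Lneg L) \<sigma>" and s\<phi>: "subst \<sigma> \<phi> \<in> Lneg L"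
      and proj: "\<And>p. N.D {\<phi>, \<sigma> p} (Var p) \<and> N.D {\<phi>, Var p} (\<sigma> p)"
      unfolding projective_def by blast
    let ?G = "{Neg (Neg \<phi>)}"
    have nn: "N.D ?G (Neg (Neg \<phi>))" by (rule N.assm) simp
    have "N.D ?G (Iff (\<sigma> p) (Var p))" for p
    proof (rule N.iffI)
      have "N.D (insert (\<sigma> p) ?G) (Neg (Neg (Var p)))"
        by (rule N.nn_mono[OF N.weak[OF nn]], rule N.mono[OF conjunct1[OF proj[of p]]]) auto
      then show "N.D (insert (\<sigma> p) ?G) (Var p)" by (rule N.stab[OF varst])
      have n1: "N.D (insert (Var p) ?G) (Neg (Neg (\<sigma> p)))"
        by (rule N.nn_mono[OF N.weak[OF nn]], rule N.mono[OF conjunct2[OF proj[of p]]]) auto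
      have n2: "N.D (insert (Var p) ?G) (Iff (\<sigma> p) (Neg (Neg (\<sigma> p))))"
        using st by (intro N.th) (simp add: stable_def)
      show "N.D (insert (Var p) ?G) (\<sigma> p)" by (rule N.stab[OF n2 n1])
    qed
    then have "N.D ?G (Iff (subst \<sigma> \<phi>) (subst Var \<phi>))" by (rule N.cong)
    then have e: "N.D ?G (Iff (subst \<sigma> \<phi>) \<phi>)" by (simp add: subst_Var)
    have g: "N.D ?G \<phi>" by (rule N.iffD1[OF e N.th[OF s\<phi>]])
    have "N.D {} (Iff \<phi> (Neg (Neg \<phi>)))"
    proof (rule N.iffI)
      show "N.D {\<phi>} (Neg (Neg \<phi>))" by (rule N.dni, rule N.assm) simp
      show "N.D {Neg (Neg \<phi>)} \<phi>" by (rule g)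
    qed
    then show "Iff \<phi> (Neg (Neg \<phi>)) \<in> Lneg L" by (rule N.der_T)
  qed
qed

end
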